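(* Let $f,g\colon[a,b]\to\mathbb{R}$ be integrable, with $a<b$. If either ($g$ is non-decreasing and $f\in M^+$) or ($g$ is non-increasing and $f\in M^-$), then $$\frac{1}{b-a}\int_a^b f(x)g(x)\,dx\geq \frac{1}{b-a}\int_a^b f(x)\,dx\cdot\frac{1}{b-a}\int_a^b g(x)\,dx.$$ If instead either ($g$ is non-decreasing and $f\in M^-$) or ($g$ is non-increasing and $f\in M^+$), then the reverse inequality $\le$ holds.
   Context: An integrable function $f\colon[a,b]\to\mathbb{R}$ belongs to the class $M^+$ if there is a $c\in[a,b]$ such that: (1) if $f(x)<\frac{1}{b-a}\int_a^b f(t)\,dt$ then $x<c$, and (2) if $f(x)>\frac{1}{b-a}\int_a^b f(t)\,dt$ then $x>c$. It belongs to the class $M^-$ if there is a $c\in[a,b]$ such that: (1) if $f(x)<\frac{1}{b-a}\int_a^b f(t)\,dt$ then $x>c$, and (2) if $f(x)>\frac{1}{b-a}\int_a^b f(t)\,dt$ then $x<c$. *)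

theory Defs
  imports "HOL-Analysis.Analysis"
begin

definition mean_val :: "(real \<Rightarrow> real) \<Rightarrow> real \<Rightarrow> real \<Rightarrow> real" where
  "mean_val f a b = (1 / (b - a)) * integral {a..b} f"

definition M_plus :: "(real \<Rightarrow> real) \<Rightarrow> real \<Rightarrow> real \<Rightarrow> bool" where
  "M_plus f a b \<longleftrightarrow> f integrable_on {a..b} \<and>
     (\<exists>c\<in>{a..b}. \<forall>x\<in>{a..b}.
        (f x < mean_val f a b \<longrightarrow> x < c) \<and> (f x > mean_val f a b \<longrightarrow> x > c))"

definition M_minus :: "(real \<Rightarrow> real) \<Rightarrow> real \<Rightarrow> real \<Rightarrow> bool" where
  "M_minus f a b \<longleftrightarrow> f integrable_on {a..b} \<and>
     (\<exists>c\<in>{a..b}. \<forall>x\<in>{a..b}.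
        (f x < mean_val f a b \<longrightarrow> x > c) \<and> (f x > mean_val f a b \<longrightarrow> x < c))"

end

theory Submission
  imports Defs
begin

lemma signed_absint:
  fixes h :: "real \<Rightarrow> real"
  assumes hi: "h integrable_on {a..b}" and c: "a \<le> c" "c \<le> b"
    and sg: "\<forall>x\<in>{a..b}. (x < c \<longrightarrow> h x \<le> 0) \<and> (x > c \<longrightarrow> h x \<ge> 0)"
  shows "h absolutely_integrable_on {a..b}"
proof -
  have i1: "h integrable_on {a..c}" by (rule integrable_on_subinterval[OF hi]) (use c in auto)
  have i2: "h integrable_on {c..b}" by (rule integrable_on_subinterval[OF hi]) (use c in auto)
  define k where "k x = (if x = c then 0 else - h x)" for x
  have "(\<lambda>x. - h x) integrable_on {a..c}" using i1 by (rule integrable_neg)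
  hence "k integrable_on {a..c}"
    by (rule integrable_spike_finite[where S="{c}" and f="\<lambda>x. - h x", rotated 2]) (auto simp: k_def)
  moreover have "\<And>x. x \<in> {a..c} \<Longrightarrow> 0 \<le> k x" using sg c by (auto simp: k_def)
  ultimately have "k absolutely_integrable_on {a..c}" by (rule nonnegative_absolutely_integrable_1)
  hence "(\<lambda>x. - k x) absolutely_integrable_on {a..c}" using absolutely_integrable_scaleR_left[where f=k and c="-1"] by simp
  hence a1: "h absolutely_integrable_on {a..c}"
    by (rule absolutely_integrable_spike[of _ _ "{c}"]) (auto simp: k_def)
  define k2 where "k2 x = (if x = c then 0 else h x)" for x
  have "k2 integrable_on {c..b}" using i2
    by (rule integrable_spike_finite[where S="{c}" and f=h, rotated 2]) (auto simp: k2_def)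
  moreover have "\<And>x. x \<in> {c..b} \<Longrightarrow> 0 \<le> k2 x" using sg c by (auto simp: k2_def)
  ultimately have "k2 absolutely_integrable_on {c..b}" by (rule nonnegative_absolutely_integrable_1)
  hence a2: "h absolutely_integrable_on {c..b}"
    by (rule absolutely_integrable_spike[of _ _ "{c}"]) (auto simp: k2_def)
  show ?thesis using absolutely_integrable_on_combine[OF a1 a2 c] .
qed

lemma main_ineq:
  fixes h g :: "real \<Rightarrow> real"
  assumes ha: "h absolutely_integrable_on {a..b}" and h0: "integral {a..b} h = 0"
    and gm: "g \<in> borel_measurable (lebesgue_on {a..b})" and gb: "bounded (g ` {a..b})"
    and c: "c \<in> {a..b}"
    and pos: "\<forall>x\<in>{a..b}. h x * (g x - g c) \<ge> 0"
  shows "integral {a..b} (\<lambda>x. h x * g x) \<ge> 0"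
proof -
  have "(\<lambda>x. g x * h x) absolutely_integrable_on {a..b}"
    by (rule absolutely_integrable_bounded_measurable_product_real[OF gm _ gb ha]) auto
  hence pi: "(\<lambda>x. h x * g x) integrable_on {a..b}"
    by (simp add: mult.commute set_lebesgue_integral_eq_integral(1))
  have hi: "h integrable_on {a..b}" using ha set_lebesgue_integral_eq_integral(1) by blast
  have hci: "(\<lambda>x. h x * g c) integrable_on {a..b}" using hi by (rule integrable_on_mult_left)
  have "integral {a..b} (\<lambda>x. h x * g x - h x * g c) \<ge> 0"
    using pos by (intro integral_nonneg integrable_diff pi hci) (auto simp: algebra_simps)
  also have "integral {a..b} (\<lambda>x. h x * g x - h x * g c)
      = integral {a..b} (\<lambda>x. h x * g x) - integral {a..b} h * g c"
    using pi hci by (simp add: integral_diff)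
  finally show ?thesis using h0 by simp
qed

lemma core:
  fixes f g :: "real \<Rightarrow> real"
  assumes ab: "a < b" and fi: "f integrable_on {a..b}" and gi: "g integrable_on {a..b}"
    and gb: "bounded (g ` {a..b})"
    and c: "c \<in> {a..b}"
    and ha0: "(\<lambda>x. f x - mean_val f a b) absolutely_integrable_on {a..b}"
    and pos: "\<forall>x\<in>{a..b}. (f x - mean_val f a b) * (g x - g c) \<ge> 0"
  shows "mean_val (\<lambda>x. f x * g x) a b \<ge> mean_val f a b * mean_val g a b"
proof -
  define m where "m = mean_val f a b"
  define h where "h x = f x - m" for x
  have hi: "h integrable_on {a..b}" unfolding h_def using fi by (intro integrable_diff) auto
  have h0: "integral {a..b} h = 0"
  proof -
    have "integral {a..b} h = integral {a..b} f - integral {a..b} (\<lambda>x. m)"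
      unfolding h_def[abs_def] by (rule integral_diff) (use fi in auto)
    also have "\<dots> = 0" using ab by (simp add: m_def mean_val_def)
    finally show ?thesis .
  qed
  have "h absolutely_integrable_on {a..b}"
    using ha0 by (simp add: h_def[abs_def] m_def)
  have I: "integral {a..b} (\<lambda>x. h x * g x) \<ge> 0"
    by (rule main_ineq[OF \<open>h absolutely_integrable_on {a..b}\<close> h0 integrable_imp_measurable[OF gi] gb c])
      (use pos in \<open>auto simp: h_def m_def\<close>)
  have "(\<lambda>x. g x * h x) absolutely_integrable_on {a..b}"
    by (rule absolutely_integrable_bounded_measurable_product_real[OF integrable_imp_measurable[OF gi] _ gb \<open>h absolutely_integrable_on {a..b}\<close>]) auto
  hence pi: "(\<lambda>x. h x * g x) integrable_on {a..b}"
    by (simp add: mult.commute set_lebesgue_integral_eq_integral(1))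
  have mgi: "(\<lambda>x. m * g x) integrable_on {a..b}" using gi by (rule integrable_on_mult_right)
  have "integral {a..b} (\<lambda>x. f x * g x) = integral {a..b} (\<lambda>x. h x * g x + m * g x)"
    by (simp add: h_def algebra_simps)
  also have "\<dots> = integral {a..b} (\<lambda>x. h x * g x) + m * integral {a..b} g"
    using pi mgi by (simp add: integral_add)
  finally have E: "integral {a..b} (\<lambda>x. f x * g x) \<ge> m * integral {a..b} g" using I by simp
  have "mean_val (\<lambda>x. f x * g x) a b \<ge> (1/(b-a)) * (m * integral {a..b} g)"
    unfolding mean_val_def using ab E by (intro mult_left_mono) auto
  thus ?thesis by (simp add: m_def mean_val_def)
qed

lemma gen:
  fixes f g :: "real \<Rightarrow> real"
  assumes ab: "a < b" and fi: "f integrable_on {a..b}" and gi: "g integrable_on {a..b}"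
    and H: "(mono_on {a..b} g \<and> M_plus f a b) \<or> (antimono_on {a..b} g \<and> M_minus f a b)"
  shows "mean_val (\<lambda>x. f x * g x) a b \<ge> mean_val f a b * mean_val g a b"
  using H
proof
  assume A: "mono_on {a..b} g \<and> M_plus f a b"
  then obtain c where c: "c \<in> {a..b}" and sg: "\<forall>x\<in>{a..b}. (f x < mean_val f a b \<longrightarrow> x < c) \<and> (f x > mean_val f a b \<longrightarrow> x > c)"
    unfolding M_plus_def by blast
  have mo: "\<And>x y. x \<in> {a..b} \<Longrightarrow> y \<in> {a..b} \<Longrightarrow> x \<le> y \<Longrightarrow> g x \<le> g y"
    using A by (auto simp: mono_on_def)
  have "g ` {a..b} \<subseteq> {g a..g b}" using mo ab by auto
  hence gb: "bounded (g ` {a..b})" by (rule bounded_subset[OF bounded_closed_interval])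
  have ha: "(\<lambda>x. f x - mean_val f a b) absolutely_integrable_on {a..b}"
    by (rule signed_absint) (use fi c sg in \<open>auto intro!: integrable_diff\<close>)
  show ?thesis
  proof (rule core[OF ab fi gi gb c ha], intro ballI)
    fix x assume x: "x \<in> {a..b}"
    consider "x < c" | "x = c" | "x > c" by linarith
    thus "(f x - mean_val f a b) * (g x - g c) \<ge> 0"
    proof cases
      case 1
      have "f x \<le> mean_val f a b" using sg x 1 by (meson less_asym not_le)
      moreover have "g x \<le> g c" using x mo[of x c] c 1 by simp
      ultimately show ?thesis by (simp add: mult_nonpos_nonpos)
    next
      case 3
      have "f x \<ge> mean_val f a b" using sg x 3 by (meson less_asym not_le)
      moreover have "g x \<ge> g c" using x mo[of c x] c 3 by simp
      ultimately show ?thesis by simp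
    qed simp
  qed
next
  assume A: "antimono_on {a..b} g \<and> M_minus f a b"
  then obtain c where c: "c \<in> {a..b}" and sg: "\<forall>x\<in>{a..b}. (f x < mean_val f a b \<longrightarrow> x > c) \<and> (f x > mean_val f a b \<longrightarrow> x < c)"
    unfolding M_minus_def by blast
  have mo: "\<And>x y. x \<in> {a..b} \<Longrightarrow> y \<in> {a..b} \<Longrightarrow> x \<le> y \<Longrightarrow> g y \<le> g x"
    using A by (auto simp: monotone_on_def)
  have "g ` {a..b} \<subseteq> {g b..g a}" using mo ab by auto
  hence gb: "bounded (g ` {a..b})" by (rule bounded_subset[OF bounded_closed_interval])
  have "(\<lambda>x. - (f x - mean_val f a b)) absolutely_integrable_on {a..b}"
    by (rule signed_absint) (use fi c sg in \<open>auto intro!: integrable_diff integrable_neg\<close>)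
  hence ha: "(\<lambda>x. f x - mean_val f a b) absolutely_integrable_on {a..b}"
    using absolutely_integrable_scaleR_left[where c="-1"] by fastforce
  show ?thesis
  proof (rule core[OF ab fi gi gb c ha], intro ballI)
    fix x assume x: "x \<in> {a..b}"
    consider "x < c" | "x = c" | "x > c" by linarith
    thus "(f x - mean_val f a b) * (g x - g c) \<ge> 0"
    proof cases
      case 1
      have "f x \<ge> mean_val f a b" using sg x 1 by (meson less_asym not_le)
      moreover have "g x \<ge> g c" using x mo[of x c] c 1 by simp
      ultimately show ?thesis by simp
    next
      case 3
      have "f x \<le> mean_val f a b" using sg x 3 by (meson less_asym not_le)
      moreover have "g x \<le> g c" using x mo[of c x] c 3 by simp
      ultimately show ?thesis by (simp add: mult_nonpos_nonpos)
    qed simp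
  qed
qed

theorem theorem4:
  fixes f g :: "real \<Rightarrow> real" and a b :: real
  assumes "a < b"
    and "f integrable_on {a..b}" and "g integrable_on {a..b}"
  shows "(((mono_on {a..b} g \<and> M_plus f a b) \<or> (antimono_on {a..b} g \<and> M_minus f a b))
           \<longrightarrow> mean_val (\<lambda>x. f x * g x) a b \<ge> mean_val f a b * mean_val g a b) \<and>
         (((mono_on {a..b} g \<and> M_minus f a b) \<or> (antimono_on {a..b} g \<and> M_plus f a b))
           \<longrightarrow> mean_val (\<lambda>x. f x * g x) a b \<le> mean_val f a b * mean_val g a b)"
proof (intro conjI impI)
  assume "(mono_on {a..b} g \<and> M_plus f a b) \<or> (antimono_on {a..b} g \<and> M_minus f a b)"
  thus "mean_val (\<lambda>x. f x * g x) a b \<ge> mean_val f a b * mean_val g a b"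
    by (rule gen[OF assms])
next
  assume H: "(mono_on {a..b} g \<and> M_minus f a b) \<or> (antimono_on {a..b} g \<and> M_plus f a b)"
  have gi': "(\<lambda>x. - g x) integrable_on {a..b}" using assms(3) by (rule integrable_neg)
  have "(mono_on {a..b} (\<lambda>x. - g x) \<and> M_plus f a b) \<or> (antimono_on {a..b} (\<lambda>x. - g x) \<and> M_minus f a b)"
    using H by (auto simp: monotone_on_def)
  from gen[OF assms(1,2) gi' this]
  show "mean_val (\<lambda>x. f x * g x) a b \<le> mean_val f a b * mean_val g a b"
    by (simp add: mean_val_def)
qed

end
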